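(* Let $s>1$. Let $z\in H$ with $\operatorname{Im} z<1$ be such that no element of $\Gamma_l$ maps $z$ into $\{w\in H:\operatorname{Im} w>1\}$. Then for all $t$, $$\Pi_l(z,t)\le \Pi_l(h,z,t)\le \Pi_l(z,t+1),$$ and $$E^l(z,s)=s\int_0^\infty e^{-st}\,\Pi_l(h,z,t)\,dt,$$ $$s\int_0^\infty e^{-st}\,\Pi_l(z,t)\,dt\le E^l(z,s)\le s\int_0^\infty e^{-st}\,\Pi_l(z,t+1)\,dt.$$
   Context: Let $\{S_l\}$ be a degenerating family of hyperbolic Riemann surfaces of genus $g$ with one puncture, parametrized by $l$ near $0\in\mathbf{R}^{6g-4}$. For each $l$, $\Gamma_l$ is a Fuchsian group with $S_l\simeq H/\Gamma_l$, where $H$ is the upper half plane with hyperbolic distance $d(\cdot,\cdot)$; $\Gamma_l$ contains $z\mapsto z+1$, and $\Gamma_\infty$ is the cyclic group it generates. The Eisenstein series is $E^l(z,s)=\sum_{\delta\in\Gamma_\infty\backslash\Gamma_l}(\operatorname{Im}\delta z)^s$ for $z\in H$, $\operatorname{Re}s>1$. For $z\in H$ and $[\delta]\in\Gamma_\infty\backslash\Gamma_l$, the canonical representative $\hat\delta$ is the unique element of $[\delta]$ with $-\tfrac12\le\operatorname{Re}\hat\delta z<\tfrac12$. Let $h=\{w\in H: -\tfrac12\le\operatorname{Re} w<\tfrac12,\ \operatorname{Im} w=1\}$. For $z$ with $\operatorname{Im} z<1$ define $\Pi_l(h,z,t)=\#\{[\delta]\in\Gamma_\infty\backslash\Gamma_l: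 d(h,\hat\delta z)\le t\}$ and $\Pi_l(z,t)=\#\{[\delta]\in\Gamma_\infty\backslash\Gamma_l: d(i,\hat\delta z)\le t\}$. *)

theory Defs
  imports "HOL-Analysis.Analysis"
begin

text \<open>Real 2x2 matrices (a,b,c,d) standing for [[a,b],[c,d]].\<close>
type_synonym mat2 = "real \<times> real \<times> real \<times> real"

fun mmul :: "mat2 \<Rightarrow> mat2 \<Rightarrow> mat2" where
  "mmul (a,b,c,d) (e,f,g,h) = (a*e+b*g, a*f+b*h, c*e+d*g, c*f+d*h)"

fun mdet :: "mat2 \<Rightarrow> real" where
  "mdet (a,b,c,d) = a*d - b*c"

fun minv :: "mat2 \<Rightarrow> mat2" where
  "minv (a,b,c,d) = (d, -b, -c, a)"

fun mnorm_le :: "mat2 \<Rightarrow> real \<Rightarrow> bool" where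
  "mnorm_le (a,b,c,d) R = (\<bar>a\<bar> \<le> R \<and> \<bar>b\<bar> \<le> R \<and> \<bar>c\<bar> \<le> R \<and> \<bar>d\<bar> \<le> R)"

fun mob :: "mat2 \<Rightarrow> complex \<Rightarrow> complex" where
  "mob (a,b,c,d) z = (of_real a * z + of_real b) / (of_real c * z + of_real d)"

definition Tmat :: mat2 where "Tmat = (1,1,0,1)"

text \<open>A Fuchsian group: a discrete subgroup of SL(2,R) (acting via Moebius maps,
  i.e. as a subgroup of PSL(2,R)).\<close>
definition fuchsian :: "mat2 set \<Rightarrow> bool" where
  "fuchsian \<Gamma> \<longleftrightarrow>
     (\<forall>g\<in>\<Gamma>. mdet g = 1) \<and> (1,0,0,1) \<in> \<Gamma> \<and>
     (\<forall>g\<in>\<Gamma>. \<forall>k\<in>\<Gamma>. mmul g k \<in> \<Gamma>) \<and> (\<forall>g\<in>\<Gamma>. minv g \<in> \<Gamma>) \<and>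
     (\<forall>R. finite {g\<in>\<Gamma>. mnorm_le g R})"

definition H :: "complex set" where "H = {z. Im z > 0}"

definition hdist :: "complex \<Rightarrow> complex \<Rightarrow> real" where
  "hdist z w = arcosh (1 + (cmod (z - w))\<^sup>2 / (2 * Im z * Im w))"

text \<open>The relation whose classes are the right cosets of the cyclic group Gamma_infinity generated by z -> z+1
  (taken at the level of Moebius maps on H, i.e. in PSL(2,R)).\<close>
definition cusp_rel :: "mat2 set \<Rightarrow> (mat2 \<times> mat2) set" where
  "cusp_rel \<Gamma> = {(\<delta>, \<delta>'). \<delta> \<in> \<Gamma> \<and> \<delta>' \<in> \<Gamma> \<and>
      (\<exists>n::int. \<forall>w\<in>H. mob \<delta>' w = mob \<delta> w + of_int n)}"

definition cosets_inf :: "mat2 set \<Rightarrow> mat2 set set" where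
  "cosets_inf \<Gamma> = \<Gamma> // cusp_rel \<Gamma>"

definition canon_pt :: "mat2 set \<Rightarrow> complex \<Rightarrow> complex" where
  "canon_pt C z = (THE w. w \<in> (\<lambda>\<delta>. mob \<delta> z) ` C \<and> -1/2 \<le> Re w \<and> Re w < 1/2)"

definition hseg :: "complex set" where
  "hseg = {w. -1/2 \<le> Re w \<and> Re w < 1/2 \<and> Im w = 1}"

definition dist_h :: "complex \<Rightarrow> real" where
  "dist_h w = (INF u\<in>hseg. hdist u w)"

definition Pi_h :: "mat2 set \<Rightarrow> complex \<Rightarrow> real \<Rightarrow> nat" where
  "Pi_h \<Gamma> z t = card {C \<in> cosets_inf \<Gamma>. dist_h (canon_pt C z) \<le> t}"

definition Pi_i :: "mat2 set \<Rightarrow> complex \<Rightarrow> real \<Rightarrow> nat" where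
  "Pi_i \<Gamma> z t = card {C \<in> cosets_inf \<Gamma>. hdist \<i> (canon_pt C z) \<le> t}"

text \<open>Eisenstein series (as an extended nonnegative real; for s > 1 it converges).\<close>
definition eisenstein :: "mat2 set \<Rightarrow> complex \<Rightarrow> real \<Rightarrow> ennreal" where
  "eisenstein \<Gamma> z s = infsum (\<lambda>C. ennreal (Im (canon_pt C z) powr s)) (cosets_inf \<Gamma>)"

end

theory Submission
  imports Defs
begin

lemma exp_tail:
  fixes s a :: real assumes "s > 0"
  shows "(\<integral>\<^sup>+t. ennreal (s * exp (- s * t)) * indicator {a..} t \<partial>lborel) = ennreal (exp (- s * a))"
proof -
  have "(\<integral>\<^sup>+t. ennreal (s * exp (- s * t)) * indicator {a..} t \<partial>lborel) = ennreal (0 - (- exp (- s * a)))"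
  proof (rule nn_integral_FTC_atLeast)
    show "(\<lambda>t. s * exp (- s * t)) \<in> borel_measurable borel" by measurable
    show "\<And>x. a \<le> x \<Longrightarrow> ((\<lambda>t. - exp (- s * t)) has_real_derivative s * exp (- s * x)) (at x)"
      by (auto intro!: derivative_eq_intros)
    show "\<And>x. a \<le> x \<Longrightarrow> 0 \<le> s * exp (- s * x)" using assms by simp
    show "((\<lambda>t. - exp (- s * t)) \<longlongrightarrow> 0) at_top" using assms
      by real_asymp
  qed
  then show ?thesis by simp
qed

lemma generic:
  fixes g :: "'a \<Rightarrow> real" and D :: "'a set" and s :: real
  assumes s: "s > 0" and g0: "\<And>C. C \<in> D \<Longrightarrow> g C \<ge> 0"
    and fin: "\<And>t. finite {C\<in>D. g C \<le> t}"
  shows "infsum (\<lambda>C. ennreal (exp (- s * g C))) D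
     = (\<integral>\<^sup>+ t\<in>{0..}. ennreal (s * exp (- s * t) * real (card {C\<in>D. g C \<le> t})) \<partial>lborel)"
proof -
  define S where "S n = {C\<in>D. g C \<le> real n}" for n :: nat
  have finS: "finite (S n)" for n unfolding S_def by (rule fin)
  have monoS: "m \<le> n \<Longrightarrow> S m \<subseteq> S n" for m n unfolding S_def by auto
  let ?f = "\<lambda>C. ennreal (exp (- s * g C))"
  have L: "infsum ?f D = (SUP n. sum ?f (S n))"
  proof -
    have "infsum ?f D = (SUP F\<in>{F. finite F \<and> F\<subseteq>D}. sum ?f F)"
      by (rule nonneg_infsum_complete) simp
    also have "\<dots> = (SUP n. sum ?f (S n))"
    proof (rule antisym)
      show "(SUP F\<in>{F. finite F \<and> F\<subseteq>D}. sum ?f F) \<le> (SUP n. sum ?f (S n))"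
      proof (rule SUP_least)
        fix F assume F: "F \<in> {F. finite F \<and> F\<subseteq>D}"
        obtain n :: nat where n: "\<forall>C\<in>F. g C \<le> real n"
        proof -
          have "finite (g ` F)" using F by auto
          then obtain M where "\<forall>x\<in>g ` F. x \<le> M"
            by (meson bdd_above.E bdd_above_finite)
          moreover obtain n :: nat where "M \<le> real n" using real_arch_simple by blast
          ultimately show ?thesis by (intro that[of n]) force
        qed
        then have "F \<subseteq> S n" using F unfolding S_def by auto
        then have "sum ?f F \<le> sum ?f (S n)" using finS by (intro sum_mono2) auto
        also have "\<dots> \<le> (SUP n. sum ?f (S n))" by (rule SUP_upper) simp
        finally show "sum ?f F \<le> (SUP n. sum ?f (S n))" .
      qed
      show "(SUP n. sum ?f (S n)) \<le> (SUP F\<in>{F. finite F \<and> F\<subseteq>D}. sum ?f F)"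
        by (rule SUP_least, rule SUP_upper) (use finS in \<open>auto simp: S_def\<close>)
    qed
    finally show ?thesis .
  qed
  define F where "F n t = (\<Sum>C\<in>S n. ennreal (s * exp (- s * t)) * indicator {g C..} t)" for n t
  have Fval: "F n t = ennreal (s * exp (- s * t)) * of_nat (card {C\<in>S n. g C \<le> t})" for n t
  proof -
    have "F n t = (\<Sum>C\<in>{C\<in>S n. g C \<le> t}. ennreal (s * exp (- s * t)))"
      unfolding F_def using finS by (intro sum.mono_neutral_cong_right) (auto simp: indicator_def)
    then show ?thesis by (simp add: mult.commute)
  qed
  have incF: "incseq F"
  proof (rule incseq_SucI, rule le_funI)
    fix n t
    have "card {C\<in>S n. g C \<le> t} \<le> card {C\<in>S (Suc n). g C \<le> t}"
      using finS monoS[of n "Suc n"] by (intro card_mono) auto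
    then show "F n t \<le> F (Suc n) t" unfolding Fval
      by (intro mult_left_mono) auto
  qed
  have pt: "ennreal (s * exp (- s * t) * real (card {C\<in>D. g C \<le> t})) * indicator {0..} t = (SUP n. F n t)" for t
  proof (cases "t \<ge> 0")
    case False
    then have "{C\<in>S n. g C \<le> t} = {}" for n using g0 unfolding S_def by force
    moreover have "{C\<in>D. g C \<le> t} = {}" using g0 False by force
    ultimately have "\<And>n. F n t = 0" unfolding Fval by (metis card.empty mult_zero_right of_nat_0)
    then show ?thesis using False by simp
  next
    case True
    obtain N :: nat where N: "t \<le> real N" using real_arch_simple by blast
    have eqN: "{C\<in>S n. g C \<le> t} = {C\<in>D. g C \<le> t}" if "N \<le> n" for n
      using N that unfolding S_def by auto
    have "ennreal (s * exp (- s * t) * real (card {C\<in>D. g C \<le> t})) = F N t"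
      unfolding Fval eqN[OF order_refl] using s by (simp add: ennreal_mult' ennreal_of_nat_eq_real_of_nat)
    also have "\<dots> = (SUP n. F n t)"
    proof (rule antisym)
      show "F N t \<le> (SUP n. F n t)" by (rule SUP_upper) simp
      show "(SUP n. F n t) \<le> F N t"
      proof (rule SUP_least)
        fix n
        have "card {C\<in>S n. g C \<le> t} \<le> card {C\<in>D. g C \<le> t}"
          using fin by (intro card_mono) (auto simp: S_def)
        then show "F n t \<le> F N t" unfolding Fval eqN[OF order_refl]
          by (intro mult_left_mono) auto
      qed
    qed
    finally show ?thesis using True by simp
  qed
  have "(\<integral>\<^sup>+ t\<in>{0..}. ennreal (s * exp (- s * t) * real (card {C\<in>D. g C \<le> t})) \<partial>lborel)
      = (\<integral>\<^sup>+ t. (SUP n. F n t) \<partial>lborel)"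
    using pt by (intro nn_integral_cong) presburger
  also have "\<dots> = (SUP n. integral\<^sup>N lborel (F n))"
    proof (rule nn_integral_monotone_convergence_SUP[OF incF])
    fix n show "F n \<in> borel_measurable lborel" unfolding F_def[abs_def] by measurable
  qed
  also have "\<dots> = (SUP n. sum ?f (S n))"
  proof -
    have "integral\<^sup>N lborel (F n) = sum ?f (S n)" for n
      unfolding F_def apply (subst nn_integral_sum)
       apply simp
      apply (rule sum.cong, rule refl)
      apply (rule exp_tail[OF s])
      done
    then show ?thesis by simp
  qed
  finally show ?thesis using L by simp
qed

lemma den_nz:
  assumes "a*d - b*c = (1::real)" "Im w > 0"
  shows "of_real c * w + of_real d \<noteq> 0"
proof
  assume h: "of_real c * w + of_real d = 0"
  then have "Im (of_real c * w + of_real d) = 0" by simp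
  then have "c = 0" using assms(2) by simp
  then have "d = 0" using h by simp
  then show False using assms(1) \<open>c = 0\<close> by simp
qed

lemma Im_mob:
  assumes "a*d - b*c = (1::real)" "Im w > 0"
  shows "Im (mob (a,b,c,d) w) = Im w / (cmod (of_real c * w + of_real d))\<^sup>2"
proof -
  have "Im ((of_real a * w + of_real b) / (of_real c * w + of_real d))
     = (Im (of_real a * w + of_real b) * Re (of_real c * w + of_real d)
        - Re (of_real a * w + of_real b) * Im (of_real c * w + of_real d)) / (cmod (of_real c * w + of_real d))\<^sup>2"
    unfolding Im_divide cmod_power2 by simp
  also have "Im (of_real a * w + of_real b) * Re (of_real c * w + of_real d)
        - Re (of_real a * w + of_real b) * Im (of_real c * w + of_real d) = (a*d-b*c) * Im w"
    by (simp add: algebra_simps)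
  finally show ?thesis using assms by simp
qed

definition Tn :: "int \<Rightarrow> mat2" where "Tn n = (1, of_int n, 0, 1)"

lemma Tn_in:
  assumes "fuchsian \<Gamma>" "Tmat \<in> \<Gamma>"
  shows "Tn n \<in> \<Gamma>"
proof -
  have nat: "Tn (int k) \<in> \<Gamma>" for k
  proof (induction k)
    case 0 then show ?case using assms(1) by (simp add: Tn_def fuchsian_def)
  next
    case (Suc k)
    have "mmul Tmat (Tn (int k)) \<in> \<Gamma>" using assms Suc by (simp add: fuchsian_def)
    moreover have "mmul Tmat (Tn (int k)) = Tn (int (Suc k))" by (simp add: Tmat_def Tn_def)
    ultimately show ?case by simp
  qed
  show ?thesis
  proof (cases "n \<ge> 0")
    case True then show ?thesis using nat[of "nat n"] by simp
  next
    case False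
    have "minv (Tn (int (nat (-n)))) \<in> \<Gamma>" using assms(1) nat[of "nat (-n)"] unfolding fuchsian_def by blast
    moreover have "minv (Tn (int (nat (-n)))) = Tn n" using False by (simp add: Tn_def)
    ultimately show ?thesis by simp
  qed
qed

lemma mob_Tn:
  assumes "mdet \<delta> = 1" "Im w > 0"
  shows "mob (mmul (Tn n) \<delta>) w = mob \<delta> w + of_int n"
proof -
  obtain a b c d where e: "\<delta> = (a,b,c,d)" by (cases \<delta>) auto
  have nz: "of_real c * w + of_real d \<noteq> 0" using den_nz[of a d b c w] assms e by simp
  show ?thesis using nz unfolding e Tn_def
    by (simp add: field_simps)
qed

lemma mdet_in: "fuchsian \<Gamma> \<Longrightarrow> g \<in> \<Gamma> \<Longrightarrow> mdet g = 1"
  by (simp add: fuchsian_def)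

lemma equiv_cusp: "equiv \<Gamma> (cusp_rel \<Gamma>)"
proof (rule equivI)
  show "cusp_rel \<Gamma> \<subseteq> \<Gamma> \<times> \<Gamma>" by (auto simp: cusp_rel_def)
  show "refl_on \<Gamma> (cusp_rel \<Gamma>)"
    by (rule refl_onI) (auto simp: cusp_rel_def intro!: exI[of _ 0])
  show "sym (cusp_rel \<Gamma>)"
  proof (rule symI)
    fix x y assume "(x, y) \<in> cusp_rel \<Gamma>"
    then obtain n :: int where "x \<in> \<Gamma>" "y \<in> \<Gamma>" "\<forall>w\<in>H. mob y w = mob x w + of_int n"
      by (auto simp: cusp_rel_def)
    then show "(y, x) \<in> cusp_rel \<Gamma>" unfolding cusp_rel_def
      by (auto intro!: exI[of _ "-n"])
  qed
  show "trans (cusp_rel \<Gamma>)"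
  proof (rule transI)
    fix x y u assume "(x, y) \<in> cusp_rel \<Gamma>" "(y, u) \<in> cusp_rel \<Gamma>"
    then obtain n m :: int where "x \<in> \<Gamma>" "y \<in> \<Gamma>" "u \<in> \<Gamma>" "\<forall>w\<in>H. mob y w = mob x w + of_int n"
       "\<forall>w\<in>H. mob u w = mob y w + of_int m"
      unfolding cusp_rel_def by blast
    then show "(x, u) \<in> cusp_rel \<Gamma>" unfolding cusp_rel_def
      by (auto intro!: exI[of _ "n+m"])
  qed
qed

lemma canon:
  assumes G: "fuchsian \<Gamma>" "Tmat \<in> \<Gamma>" and z: "Im z > 0" and C: "C \<in> cosets_inf \<Gamma>"
  shows "\<exists>\<delta>\<in>C. \<delta> \<in> \<Gamma> \<and> mob \<delta> z = canon_pt C z \<and> -1/2 \<le> Re (canon_pt C z) \<and> Re (canon_pt C z) < 1/2"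
proof -
  obtain \<delta>0 where d0: "\<delta>0 \<in> \<Gamma>" and Ceq: "C = cusp_rel \<Gamma> `` {\<delta>0}"
    using C unfolding cosets_inf_def by (auto elim!: quotientE)
  have memC: "\<delta> \<in> C \<longleftrightarrow> (\<delta>0, \<delta>) \<in> cusp_rel \<Gamma>" for \<delta> using Ceq by auto
  have zH: "z \<in> H" using z by (simp add: H_def)
  define w0 where "w0 = mob \<delta>0 z"
  define n where "n = - \<lfloor>Re w0 + 1/2\<rfloor>"
  define \<delta>' where "\<delta>' = mmul (Tn n) \<delta>0"
  have det0: "mdet \<delta>0 = 1" using mdet_in[OF G(1) d0] .
  have d'G: "\<delta>' \<in> \<Gamma>" using G d0 Tn_in[OF G, of n] unfolding \<delta>'_def fuchsian_def by blast
  have "\<forall>w\<in>H. mob \<delta>' w = mob \<delta>0 w + of_int n"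
    unfolding \<delta>'_def using mob_Tn[OF det0] by (auto simp: H_def)
  then have d'C: "\<delta>' \<in> C" unfolding memC cusp_rel_def using d0 d'G by blast
  have mz: "mob \<delta>' z = w0 + of_int n" using mob_Tn[OF det0 z] unfolding \<delta>'_def w0_def by simp
  have strip: "-1/2 \<le> Re (mob \<delta>' z) \<and> Re (mob \<delta>' z) < 1/2"
    unfolding mz n_def using floor_correct[of "Re w0 + 1/2"] by simp linarith
  have uniq: "w1 = w2" if h: "w1 \<in> (\<lambda>\<delta>. mob \<delta> z) ` C" "-1/2 \<le> Re w1" "Re w1 < 1/2"
       "w2 \<in> (\<lambda>\<delta>. mob \<delta> z) ` C" "-1/2 \<le> Re w2" "Re w2 < 1/2" for w1 w2
  proof -
    obtain \<delta>1 \<delta>2 where "\<delta>1 \<in> C" "\<delta>2 \<in> C" "w1 = mob \<delta>1 z" "w2 = mob \<delta>2 z" using h(1,4) by blast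
    then obtain n1 n2 :: int where "w1 = w0 + of_int n1" "w2 = w0 + of_int n2"
      unfolding memC cusp_rel_def w0_def using zH by blast
    moreover have "n1 = n2"
    proof -
      have "\<bar>real_of_int n1 - real_of_int n2\<bar> < 1" using h \<open>w1 = w0 + of_int n1\<close> \<open>w2 = w0 + of_int n2\<close> by simp
      then show ?thesis by linarith
    qed
    ultimately show ?thesis by simp
  qed
  have ex1: "\<exists>!w. w \<in> (\<lambda>\<delta>. mob \<delta> z) ` C \<and> -1/2 \<le> Re w \<and> Re w < 1/2"
    using d'C strip uniq by blast
  have "canon_pt C z = mob \<delta>' z"
    unfolding canon_pt_def using d'C strip by (intro the1_equality[OF ex1]) auto
  then show ?thesis using d'C d'G strip by auto
qed

lemma arcosh_mono_real: "1 \<le> (x::real) \<Longrightarrow> x \<le> y \<Longrightarrow> arcosh x \<le> arcosh y"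
proof -
  assume h: "1 \<le> x" "x \<le> y"
  then have "\<not> arcosh y < arcosh x" using arcosh_less_iff_real[of y x] by simp
  then show ?thesis by simp
qed

lemma le_arcosh: "0 \<le> (a::real) \<Longrightarrow> cosh a \<le> X \<Longrightarrow> a \<le> arcosh X"
  using arcosh_mono_real[of "cosh a" X] arcosh_cosh_real[of a] cosh_real_ge_1[of a] by simp

lemma arcosh_le: "0 \<le> (a::real) \<Longrightarrow> 1 \<le> X \<Longrightarrow> X \<le> cosh a \<Longrightarrow> arcosh X \<le> a"
  using arcosh_mono_real[of X "cosh a"] arcosh_cosh_real[of a] by simp

lemma cosh_mlny: "(y::real) > 0 \<Longrightarrow> cosh (- ln y) = (y + 1/y) / 2"
  by (simp add: cosh_ln_real field_simps)

lemma cosh_1mlny: "(y::real) > 0 \<Longrightarrow> cosh (- ln y + 1) = (exp 1 / y + y / exp 1) / 2"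
proof -
  assume y: "y > 0"
  have eq: "- ln y + 1 = ln (exp 1 / y)" using y by (subst ln_div) auto
  have "cosh (ln (exp 1 / y)) = (exp 1 / y + y / exp 1) / 2"
    using y by (subst cosh_ln_real) (auto simp: field_simps)
  then show ?thesis unfolding eq .
qed

lemma hdist_lower:
  assumes "Im u = 1" "Im w > 0" "Im w \<le> 1"
  shows "- ln (Im w) \<le> hdist u w"
proof -
  define y where "y = Im w"
  have y: "y > 0" "y \<le> 1" using assms y_def by auto
  have sq: "(1 - y)\<^sup>2 \<le> (cmod (u - w))\<^sup>2"
  proof -
    have "(1 - y)\<^sup>2 = \<bar>Im (u - w)\<bar>\<^sup>2" using assms y_def by simp
    also have "\<dots> \<le> (cmod (u - w))\<^sup>2" by (rule power_mono[OF abs_Im_le_cmod]) simp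
    finally show ?thesis .
  qed
  have "cosh (- ln y) \<le> 1 + (cmod (u - w))\<^sup>2 / (2 * Im u * Im w)"
  proof -
    have "cosh (- ln y) = 1 + (1 - y)\<^sup>2 / (2 * y)" unfolding cosh_mlny[OF y(1)] using y by (simp add: field_simps power2_eq_square)
    also have "\<dots> \<le> 1 + (cmod (u - w))\<^sup>2 / (2 * Im u * Im w)"
    proof -
      have den: "2 * Im u * Im w = 2 * y" using assms y_def by simp
      show ?thesis unfolding den using divide_right_mono[OF sq, of "2*y"] y by simp
    qed
    finally show ?thesis .
  qed
  moreover have "0 \<le> - ln y" using y by simp
  ultimately show ?thesis unfolding hdist_def y_def by (intro le_arcosh) (auto simp: y_def)
qed


lemma hdist_vert:
  assumes "Im w > 0" "Im w \<le> 1"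
  shows "hdist (Complex (Re w) 1) w = - ln (Im w)"
proof -
  define y where "y = Im w"
  have y: "y > 0" "y \<le> 1" using assms y_def by auto
  have c: "(cmod (Complex (Re w) 1 - w))\<^sup>2 = (1 - y)\<^sup>2"
    unfolding y_def cmod_power2 by simp
  have e: "1 + (1 - y)\<^sup>2 / (2 * 1 * y) = (y + 1/y) / 2"
    using y by (simp add: field_simps power2_eq_square)
  have "1 + (cmod (Complex (Re w) 1 - w))\<^sup>2 / (2 * Im (Complex (Re w) 1) * Im w) = cosh (- ln y)"
    unfolding c cosh_mlny[OF y(1)] using e by (simp add: y_def[symmetric])
  then have "hdist (Complex (Re w) 1) w = arcosh (cosh (- ln y))" unfolding hdist_def by simp
  also have "\<dots> = - ln y" using y by (intro arcosh_cosh_real) simp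
  finally show ?thesis unfolding y_def .
qed

lemma dist_h_eq:
  assumes "Im w > 0" "Im w \<le> 1" "-1/2 \<le> Re w" "Re w < 1/2"
  shows "dist_h w = - ln (Im w)"
proof -
  have mem: "Complex (Re w) 1 \<in> hseg" using assms by (simp add: hseg_def)
  show ?thesis unfolding dist_h_def
  proof (rule antisym)
    show "(INF u\<in>hseg. hdist u w) \<le> - ln (Im w)"
    proof -
      have bdd: "bdd_below ((\<lambda>u. hdist u w) ` hseg)"
        using hdist_lower assms(1,2) by (intro bdd_belowI2[of _ "- ln (Im w)"]) (auto simp: hseg_def)
      have "(INF u\<in>hseg. hdist u w) \<le> hdist (Complex (Re w) 1) w" by (rule cINF_lower[OF bdd mem])
      then show ?thesis using hdist_vert[OF assms(1,2)] by simp
    qed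
    show "- ln (Im w) \<le> (INF u\<in>hseg. hdist u w)"
    proof (rule cINF_greatest)
      show "hseg \<noteq> {}" using mem by blast
      fix u assume "u \<in> hseg"
      then show "- ln (Im w) \<le> hdist u w" using hdist_lower assms by (simp add: hseg_def)
    qed
  qed
qed

lemma hdist_i_upper:
  assumes "Im w > 0" "Im w \<le> 1" "-1/2 \<le> Re w" "Re w < 1/2"
  shows "hdist \<i> w \<le> - ln (Im w) + 1"
proof -
  define y where "y = Im w"
  define x where "x = Re w"
  have y: "y > 0" "y \<le> 1" using assms y_def by auto
  have x2: "x\<^sup>2 \<le> 1/4"
  proof -
    have "\<bar>x\<bar> \<le> 1/2" using assms x_def by simp
    then have "\<bar>x\<bar>\<^sup>2 \<le> (1/2)\<^sup>2" by (intro power_mono) auto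
    then show ?thesis by (simp add: power2_eq_square)
  qed
  have e2: "exp 1 \<ge> (2::real)" using exp_ge_add_one_self[of 1] by simp
  have c: "(cmod (\<i> - w))\<^sup>2 = x\<^sup>2 + (1 - y)\<^sup>2"
    unfolding y_def x_def cmod_power2 by (simp add: power2_eq_square)
  have key: "x\<^sup>2 + 1 + y\<^sup>2 \<le> exp 1 + y\<^sup>2 / exp 1"
  proof -
    define E where "E = (exp 1::real)"
    have E2: "E \<ge> 2" using e2 E_def by simp
    have a: "y\<^sup>2 * (E - 1) \<le> 1 * (E - 1)"
      using y E2 by (intro mult_right_mono) (auto simp: power_le_one)
    have b: "0 \<le> (E - 2) * (E - 1/2)" using E2 by simp
    have c: "E * x\<^sup>2 \<le> E * (1/4)" using x2 E2 by (intro mult_left_mono) auto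
    have "E * (x\<^sup>2 + 1 + y\<^sup>2) \<le> E * E + y\<^sup>2"
    proof -
      have c': "E * x\<^sup>2 \<le> E / 4" using c by simp
      have a': "E * y\<^sup>2 \<le> E + y\<^sup>2 - 1" using a by (simp add: algebra_simps)
      have bb: "(E-2)*(E-1/2) = E*E - 5/2*E + 1" by (simp add: field_simps)
      have b': "9 * E / 4 - 1 \<le> E * E" using b bb E2 by linarith
      show ?thesis using a' b' c' by (simp add: algebra_simps)
    qed
    then have "E * (x\<^sup>2 + 1 + y\<^sup>2) / E \<le> (E * E + y\<^sup>2) / E" using E2 by (intro divide_right_mono) auto
    then show ?thesis using E2 unfolding E_def[symmetric] by (simp add: add_divide_distrib)
  qed
  have "1 + (cmod (\<i> - w))\<^sup>2 / (2 * Im \<i> * Im w) \<le> cosh (- ln y + 1)"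
  proof -
    have den: "2 * Im \<i> * Im w = 2 * y" using y_def by simp
    have L: "1 + (x\<^sup>2 + (1 - y)\<^sup>2) / (2 * y) = (x\<^sup>2 + 1 + y\<^sup>2) / (2 * y)"
      using y by (simp add: field_simps power2_eq_square)
    have R: "(exp 1 / y + y / exp 1) / 2 = (exp 1 + y\<^sup>2 / exp 1) / (2 * y)"
      using y by (simp add: field_simps power2_eq_square)
    show ?thesis unfolding c cosh_1mlny[OF y(1)] den L R
      using divide_right_mono[OF key, of "2*y"] y by simp
  qed
  moreover have "1 \<le> 1 + (cmod (\<i> - w))\<^sup>2 / (2 * Im \<i> * Im w)" using y by (simp add: y_def)
  moreover have "0 \<le> - ln y + 1" using y ln_le_minus_one[of y] ln_le_zero_iff[of y] by linarith
  ultimately show ?thesis unfolding hdist_def y_def by (intro arcosh_le) (auto simp: y_def)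
qed



lemma fin_cosets:
  assumes G: "fuchsian \<Gamma>" "Tmat \<in> \<Gamma>" and z: "Im z > 0"
    and up: "\<forall>\<delta>\<in>\<Gamma>. \<not> (Im (mob \<delta> z) > 1)" and eps: "eps > 0"
  shows "finite {C \<in> cosets_inf \<Gamma>. Im (canon_pt C z) \<ge> eps}"
proof -
  define S where "S = {C \<in> cosets_inf \<Gamma>. Im (canon_pt C z) \<ge> eps}"
  define rep where "rep C = (SOME \<delta>. \<delta> \<in> C \<and> \<delta> \<in> \<Gamma> \<and> mob \<delta> z = canon_pt C z)" for C
  have rep: "rep C \<in> C \<and> rep C \<in> \<Gamma> \<and> mob (rep C) z = canon_pt C z
      \<and> -1/2 \<le> Re (canon_pt C z) \<and> Re (canon_pt C z) < 1/2" if CD0: "C \<in> cosets_inf \<Gamma>" for C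
  proof -
    obtain \<delta> where "\<delta> \<in> C" "\<delta> \<in> \<Gamma>" "mob \<delta> z = canon_pt C z" "-1/2 \<le> Re (canon_pt C z)" "Re (canon_pt C z) < 1/2"
      using canon[OF G z CD0] by blast
    then show ?thesis unfolding rep_def by (metis (mono_tags, lifting) someI)
  qed
  have inj: "inj_on rep S"
  proof (rule inj_onI)
    fix C1 C2 assume h: "C1 \<in> S" "C2 \<in> S" "rep C1 = rep C2"
    then have D: "C1 \<in> cosets_inf \<Gamma>" "C2 \<in> cosets_inf \<Gamma>" unfolding S_def by auto
    have "rep C1 \<in> C1" "rep C2 \<in> C2" using rep[OF D(1)] rep[OF D(2)] by auto
    then have "C1 \<in> cosets_inf \<Gamma>" "C2 \<in> cosets_inf \<Gamma>" "rep C1 \<in> C1 \<inter> C2"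
      using D h(3) by auto
    then show "C1 = C2" using quotient_disj[OF equiv_cusp[of \<Gamma>]] unfolding cosets_inf_def by blast
  qed
  define K where "K = sqrt (Im z / eps)"
  define R where "R = 2 * K * (1 + (1 + cmod z) / Im z)"
  have Kpos: "K \<ge> 0" unfolding K_def using z eps by simp
  have sub: "rep ` S \<subseteq> {g \<in> \<Gamma>. mnorm_le g R}"
  proof
    fix g assume "g \<in> rep ` S"
    then obtain C where C: "C \<in> S" "g = rep C" by auto
    then have CD: "C \<in> cosets_inf \<Gamma>" unfolding S_def by simp
    have gG: "g \<in> \<Gamma>" using rep[OF CD] C by simp
    obtain a b c d where e: "g = (a,b,c,d)" by (cases g) auto
    have det: "a*d - b*c = 1" using mdet_in[OF G(1) gG] e by simp
    define w where "w = mob g z"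
    have wc: "w = canon_pt C z" using rep[OF CD] C w_def by simp
    have wre: "\<bar>Re w\<bar> \<le> 1/2" using rep[OF CD] wc by auto
    have wim: "Im w \<le> 1" using up gG w_def by (simp add: not_less)
    have wim2: "Im w \<ge> eps" using C(1) wc unfolding S_def by simp
    define q where "q = of_real c * z + of_real d"
    define p where "p = of_real a * z + of_real b"
    have qnz: "q \<noteq> 0" using den_nz[OF det z] q_def by simp
    have wpq: "w = p / q" unfolding w_def e p_def q_def by simp
    have Imw: "Im w = Im z / (cmod q)\<^sup>2" unfolding w_def e q_def using Im_mob[OF det z] by simp
    have cq: "cmod q > 0" using qnz by simp
    have q2: "(cmod q)\<^sup>2 \<le> Im z / eps"
    proof -
      have "eps \<le> Im z / (cmod q)\<^sup>2" using wim2 Imw by simp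
      then have "eps * (cmod q)\<^sup>2 \<le> Im z" using cq by (simp add: field_simps)
      then show ?thesis using eps by (simp add: field_simps)
    qed
    have qK: "cmod q \<le> K" unfolding K_def using q2 by (metis norm_ge_zero real_le_rsqrt)
    have Imq: "Im q = c * Im z" "Re q = c * Re z + d" unfolding q_def by simp_all
    have Imp: "Im p = a * Im z" "Re p = a * Re z + b" unfolding p_def by simp_all
    have cb: "\<bar>c\<bar> \<le> K / Im z"
    proof -
      have "\<bar>c\<bar> * Im z \<le> K" using abs_Im_le_cmod[of q] qK Imq z by (simp add: abs_mult)
      then show ?thesis using z by (simp add: field_simps)
    qed
    have db: "\<bar>d\<bar> \<le> K + K / Im z * cmod z"
    proof -
      have "\<bar>d\<bar> \<le> \<bar>Re q\<bar> + \<bar>c\<bar> * \<bar>Re z\<bar>" using Imq abs_triangle_ineq4[of "c*Re z + d" "c*Re z"] by (simp add: abs_mult)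
      also have "\<dots> \<le> K + K / Im z * cmod z"
        using abs_Re_le_cmod[of q] qK cb abs_Re_le_cmod[of z]
        by (intro add_mono mult_mono) (auto intro: order.trans)
      finally show ?thesis .
    qed
    have pw: "p = w * q" using wpq qnz by simp
    have cw: "cmod w \<le> 2"
    proof -
      have "cmod w \<le> \<bar>Re w\<bar> + \<bar>Im w\<bar>" by (rule cmod_le)
      moreover have "\<bar>Im w\<bar> \<le> 1" using wim wim2 eps by simp
      ultimately show ?thesis using wre by simp
    qed
    have pK: "cmod p \<le> 2 * K" unfolding pw norm_mult using cw qK Kpos
      by (intro mult_mono) auto
    have ab: "\<bar>a\<bar> \<le> 2 * K / Im z"
    proof -
      have "\<bar>a\<bar> * Im z \<le> 2 * K" using abs_Im_le_cmod[of p] pK Imp z by (simp add: abs_mult)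
      then show ?thesis using z by (simp add: field_simps)
    qed
    have bb: "\<bar>b\<bar> \<le> 2 * K + 2 * K / Im z * cmod z"
    proof -
      have "\<bar>b\<bar> \<le> \<bar>Re p\<bar> + \<bar>a\<bar> * \<bar>Re z\<bar>" using Imp abs_triangle_ineq4[of "a*Re z + b" "a*Re z"] by (simp add: abs_mult)
      also have "\<dots> \<le> 2 * K + 2 * K / Im z * cmod z"
        using abs_Re_le_cmod[of p] pK ab abs_Re_le_cmod[of z] Kpos z
        by (intro add_mono mult_mono) (auto intro: order.trans)
      finally show ?thesis .
    qed
    have R1: "2 * K + 2 * K / Im z * cmod z \<le> R" "K / Im z \<le> R" "2 * K / Im z \<le> R"
      "K + K / Im z * cmod z \<le> R"
      using Kpos z unfolding R_def by (auto simp: field_simps)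
    have "mnorm_le g R" unfolding e using ab bb cb db R1 by auto
    then show "g \<in> {g \<in> \<Gamma>. mnorm_le g R}" using gG by simp
  qed
  have "finite {g \<in> \<Gamma>. mnorm_le g R}" using G(1) unfolding fuchsian_def by blast
  then have "finite (rep ` S)" using sub finite_subset by blast
  then show ?thesis using inj finite_image_iff S_def by blast
qed

theorem proposition2p2:
  fixes \<Gamma> :: "mat2 set" and z :: complex and s :: real
  assumes "fuchsian \<Gamma>" and "Tmat \<in> \<Gamma>"
    and "s > 1"
    and "Im z > 0" and "Im z < 1"
    and "\<forall>\<delta>\<in>\<Gamma>. \<not> (Im (mob \<delta> z) > 1)"
  shows "(\<forall>t::real. Pi_i \<Gamma> z t \<le> Pi_h \<Gamma> z t \<and> Pi_h \<Gamma> z t \<le> Pi_i \<Gamma> z (t + 1))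
    \<and> eisenstein \<Gamma> z s
        = (\<integral>\<^sup>+ t\<in>{0..}. ennreal (s * exp (- s * t) * real (Pi_h \<Gamma> z t)) \<partial>lborel)
    \<and> (\<integral>\<^sup>+ t\<in>{0..}. ennreal (s * exp (- s * t) * real (Pi_i \<Gamma> z t)) \<partial>lborel)
        \<le> eisenstein \<Gamma> z s
    \<and> eisenstein \<Gamma> z s
        \<le> (\<integral>\<^sup>+ t\<in>{0..}. ennreal (s * exp (- s * t) * real (Pi_i \<Gamma> z (t + 1))) \<partial>lborel)"
proof -
  note G = assms(1,2) and z = assms(4) and up = assms(6)
  define D where "D = cosets_inf \<Gamma>"
  define y where "y C = Im (canon_pt C z)" for C
  define g where "g C = - ln (y C)" for C
  define e where "e C = hdist \<i> (canon_pt C z)" for C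
  have props: "0 < y C \<and> y C \<le> 1 \<and> dist_h (canon_pt C z) = g C \<and> g C \<ge> 0 \<and> g C \<le> e C \<and> e C \<le> g C + 1"
    if CD: "C \<in> D" for C
  proof -
    obtain \<delta> where d: "\<delta> \<in> \<Gamma>" "mob \<delta> z = canon_pt C z" "-1/2 \<le> Re (canon_pt C z)" "Re (canon_pt C z) < 1/2"
      using canon[OF G z] CD unfolding D_def by blast
    obtain a b c dd where de: "\<delta> = (a,b,c,dd)" by (cases \<delta>) auto
    have det: "a*dd - b*c = 1" using mdet_in[OF G(1) d(1)] de by simp
    have "of_real c * z + of_real dd \<noteq> 0" using den_nz[OF det z] .
    then have ypos: "y C > 0" unfolding y_def using d(2) de Im_mob[OF det z] z by simp
    have yle: "y C \<le> 1" unfolding y_def using up d(1,2) by (metis not_less)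
    have w: "0 < Im (canon_pt C z)" "Im (canon_pt C z) \<le> 1" using ypos yle y_def by auto
    show ?thesis
      using ypos yle dist_h_eq[OF w d(3,4)] hdist_lower[of \<i> "canon_pt C z"] w hdist_i_upper[OF w d(3,4)]
      unfolding g_def e_def y_def by auto
  qed
  have finy: "finite {C\<in>D. g C \<le> t}" for t
  proof -
    have "{C\<in>D. g C \<le> t} \<subseteq> {C \<in> cosets_inf \<Gamma>. Im (canon_pt C z) \<ge> exp (- t)}"
    proof
      fix C assume "C \<in> {C\<in>D. g C \<le> t}"
      then have C: "C \<in> D" "- ln (y C) \<le> t" unfolding g_def by auto
      have "exp (- t) \<le> exp (ln (y C))" using C(2) by simp
      then show "C \<in> {C \<in> cosets_inf \<Gamma>. Im (canon_pt C z) \<ge> exp (- t)}"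
        using props[OF C(1)] C(1) unfolding D_def y_def by simp
    qed
    then show ?thesis using fin_cosets[OF G z up, of "exp (- t)"] finite_subset by auto
  qed
  have Ph: "Pi_h \<Gamma> z t = card {C\<in>D. g C \<le> t}" for t
    unfolding Pi_h_def D_def[symmetric] using props by (intro arg_cong[where f=card]) auto
  have Pi: "Pi_i \<Gamma> z t = card {C\<in>D. e C \<le> t}" for t
    unfolding Pi_i_def D_def[symmetric] e_def by simp
  have ineq1: "Pi_i \<Gamma> z t \<le> Pi_h \<Gamma> z t" for t
    unfolding Ph Pi using finy props by (intro card_mono) force+
  have ineq2: "Pi_h \<Gamma> z t \<le> Pi_i \<Gamma> z (t + 1)" for t
  proof -
    have "{C\<in>D. e C \<le> t + 1} \<subseteq> {C\<in>D. g C \<le> t + 1}" using props by force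
    then have "finite {C\<in>D. e C \<le> t + 1}" using finy finite_subset by blast
    then show ?thesis unfolding Ph Pi using props by (intro card_mono) force+
  qed
  have s0: "s > 0" using assms(3) by simp
  have E: "eisenstein \<Gamma> z s = infsum (\<lambda>C. ennreal (exp (- s * g C))) D"
    unfolding eisenstein_def D_def[symmetric]
  proof (rule infsum_cong)
    fix C assume "C \<in> D"
    then have "y C > 0" using props by blast
    then show "ennreal (Im (canon_pt C z) powr s) = ennreal (exp (- s * g C))"
      unfolding g_def y_def by (simp add: powr_def mult.commute)
  qed
  also have "\<dots> = (\<integral>\<^sup>+ t\<in>{0..}. ennreal (s * exp (- s * t) * real (card {C\<in>D. g C \<le> t})) \<partial>lborel)"
    using generic[OF s0, of D g] props finy by blast
  finally have E2: "eisenstein \<Gamma> z s = (\<integral>\<^sup>+ t\<in>{0..}. ennreal (s * exp (- s * t) * real (Pi_h \<Gamma> z t)) \<partial>lborel)"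
    unfolding Ph .
  have mono: "(\<integral>\<^sup>+ t\<in>{0..}. ennreal (s * exp (- s * t) * real (P t)) \<partial>lborel)
       \<le> (\<integral>\<^sup>+ t\<in>{0..}. ennreal (s * exp (- s * t) * real (Q t)) \<partial>lborel)"
    if "\<And>t. P t \<le> Q t" for P Q :: "real \<Rightarrow> nat"
  proof (rule nn_integral_mono)
    fix t
    have "s * exp (- s * t) * real (P t) \<le> s * exp (- s * t) * real (Q t)"
      using that[of t] s0 by (intro mult_left_mono) auto
    then show "ennreal (s * exp (- s * t) * real (P t)) * indicator {0..} t
        \<le> ennreal (s * exp (- s * t) * real (Q t)) * indicator {0..} t"
      by (intro mult_right_mono ennreal_leI) auto
  qed
  show ?thesis
    using ineq1 ineq2 E2 mono[of "Pi_i \<Gamma> z" "Pi_h \<Gamma> z"] mono[of "Pi_h \<Gamma> z" "\<lambda>t. Pi_i \<Gamma> z (t + 1)"]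
    by auto
qed

end
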